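(* Let $X\subseteq\mathscr{A}^\infty$ be a shift space and suppose there is a sequence $(X_n)_{n=1}^\infty$ of shift spaces over $\mathscr{A}$, each with the $\bar d$-shadowing property, such that $X\subseteq X_n$ for every $n$ and $\bar d^H(X,X_n)\to0$ as $n\to\infty$. Then $X$ has the $\bar d$-shadowing property.
   Context: Shift spaces are nonempty closed shift-invariant subsets of $\mathscr{A}^\infty=\mathscr{A}^{\mathbb N_0}$, $\mathscr{A}$ finite; $\mathcal L(X)$ is the set of finite words appearing in $X$. $\bar d(x,y)=\limsup_{n\to\infty}\frac1n|\{0\le j<n:x_j\ne y_j\}|$ and $\bar d^H$ is its Hausdorff distance on nonempty subsets: $\bar d^H(A,B)=\max\{\sup_{a\in A}\inf_{b\in B}\bar d(a,b),\sup_{b\in B}\inf_{a\in A}\bar d(a,b)\}$. $X$ has the $\bar d$-shadowing property if for every $\varepsilon>0$ there is $N$ such that for every sequence $(w^{(j)})_{j\ge1}$ in $\mathcal L(X)$ with $|w^{(j)}|\ge N$ there is $x'\in X$ with $\bar d(w^{(1)}w^{(2)}\cdots,x')<\varepsilon$. *)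

theory Defs
  imports "HOL-Analysis.Analysis"
begin

definition shift :: "(nat \<Rightarrow> 'a) \<Rightarrow> (nat \<Rightarrow> 'a)" where
  "shift x = (\<lambda>n. x (Suc n))"

definition shift_space :: "(nat \<Rightarrow> 'a::finite) set \<Rightarrow> bool" where
  "shift_space X \<longleftrightarrow> X \<noteq> {}
     \<and> closedin (product_topology (\<lambda>_::nat. discrete_topology (UNIV::'a set)) UNIV) X
     \<and> shift ` X \<subseteq> X"

definition language :: "(nat \<Rightarrow> 'a) set \<Rightarrow> 'a list set" where
  "language X = {w. \<exists>x\<in>X. \<exists>i. w = map x [i..<i + length w]}"

definition dbar :: "(nat \<Rightarrow> 'a) \<Rightarrow> (nat \<Rightarrow> 'a) \<Rightarrow> real" where
  "dbar x y = real_of_ereal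
     (limsup (\<lambda>n. ereal (real (card {j. j < n \<and> x j \<noteq> y j}) / real n)))"

definition dbarH :: "(nat \<Rightarrow> 'a) set \<Rightarrow> (nat \<Rightarrow> 'a) set \<Rightarrow> real" where
  "dbarH A B = max (SUP a\<in>A. INF b\<in>B. dbar a b) (SUP b\<in>B. INF a\<in>A. dbar a b)"

text \<open>Concatenation w 0 w 1 w 2 ... of an infinite sequence of (nonempty) words.\<close>
definition concat_inf :: "(nat \<Rightarrow> 'a list) \<Rightarrow> nat \<Rightarrow> 'a" where
  "concat_inf w n = (let k = (LEAST k. n < (\<Sum>i<Suc k. length (w i)))
                     in w k ! (n - (\<Sum>i<k. length (w i))))"

definition dbar_shadowing :: "(nat \<Rightarrow> 'a) set \<Rightarrow> bool" where
  "dbar_shadowing X \<longleftrightarrow> (\<forall>\<epsilon>>0. \<exists>N\<ge>1. \<forall>w::nat \<Rightarrow> 'a list.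
      (\<forall>j. w j \<in> language X \<and> length (w j) \<ge> N) \<longrightarrow>
      (\<exists>x'\<in>X. dbar (concat_inf w) x' < \<epsilon>))"

end

theory Submission
  imports Defs
begin

lemma frac_bounds:
  "0 \<le> real (card {j. j < n \<and> P j}) / real n \<and> real (card {j. j < n \<and> P j}) / real n \<le> 1"
proof -
  have "card {j. j < n \<and> P j} \<le> card {..<n}" by (rule card_mono) auto
  then show ?thesis by (cases "n = 0") (auto simp: field_simps)
qed

lemma limsup_bounds:
  fixes x y :: "nat \<Rightarrow> 'a"
  defines "L \<equiv> limsup (\<lambda>n. ereal (real (card {j. j < n \<and> x j \<noteq> y j}) / real n))"
  shows "0 \<le> L \<and> L \<le> 1"
proof
  have "L \<le> 1" unfolding L_def
    by (rule Limsup_bounded) (use frac_bounds in auto)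
  moreover have "0 \<le> L" unfolding L_def
    by (rule le_Limsup) (use frac_bounds in auto)
  ultimately show "0 \<le> L" "L \<le> 1" by auto
qed

lemma dbar_bounds: "0 \<le> dbar x y \<and> dbar x y \<le> 1"
proof -
  obtain L where L: "L = limsup (\<lambda>n. ereal (real (card {j. j < n \<and> x j \<noteq> y j}) / real n))" by blast
  have "0 \<le> L \<and> L \<le> 1" using limsup_bounds[of x y] L by simp
  then show ?thesis unfolding dbar_def L[symmetric]
    by (cases L) auto
qed

lemma dbar_sym: "dbar x y = dbar y x"
  unfolding dbar_def by (simp add: eq_commute)

lemma dbar_tri: "dbar (x::nat\<Rightarrow>'a) z \<le> dbar x y + dbar y z"
proof -
  define f :: "(nat\<Rightarrow>'a) \<Rightarrow> (nat\<Rightarrow>'a) \<Rightarrow> nat \<Rightarrow> ereal" where "f = (\<lambda>x y n. ereal (real (card {j. j < n \<and> x j \<noteq> y j}) / real n))"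
  have pt: "f x z n \<le> f x y n + f y z n" for n
  proof -
    have "{j. j < n \<and> x j \<noteq> z j} \<subseteq> {j. j < n \<and> x j \<noteq> y j} \<union> {j. j < n \<and> y j \<noteq> z j}" by auto
    then have "card {j. j < n \<and> x j \<noteq> z j} \<le> card ({j. j < n \<and> x j \<noteq> y j} \<union> {j. j < n \<and> y j \<noteq> z j})"
      by (rule card_mono[rotated]) auto
    also have "\<dots> \<le> card {j. j < n \<and> x j \<noteq> y j} + card {j. j < n \<and> y j \<noteq> z j}"
      by (rule card_Un_le)
    finally have "real (card {j. j < n \<and> x j \<noteq> z j}) \<le> real (card {j. j < n \<and> x j \<noteq> y j}) + real (card {j. j < n \<and> y j \<noteq> z j})"
      by linarith
    then have "real (card {j. j < n \<and> x j \<noteq> z j}) / real n \<le> real (card {j. j < n \<and> x j \<noteq> y j}) / real n + real (card {j. j < n \<and> y j \<noteq> z j}) / real n"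
      by (simp add: add_divide_distrib[symmetric] divide_right_mono)
    then show ?thesis unfolding f_def by simp
  qed
  have "limsup (f x z) \<le> limsup (\<lambda>n. f x y n + f y z n)"
    by (rule Limsup_mono) (use pt in auto)
  also have "\<dots> \<le> limsup (f x y) + limsup (f y z)"
    by (rule ereal_limsup_add_mono)
  finally have le: "limsup (f x z) \<le> limsup (f x y) + limsup (f y z)" .
  have b1: "0 \<le> limsup (f x z) \<and> limsup (f x z) \<le> 1" using limsup_bounds[of x z] unfolding f_def by simp
  have b2: "0 \<le> limsup (f x y) \<and> limsup (f x y) \<le> 1" using limsup_bounds[of x y] unfolding f_def by simp
  have b3: "0 \<le> limsup (f y z) \<and> limsup (f y z) \<le> 1" using limsup_bounds[of y z] unfolding f_def by simp
  have "dbar x z = real_of_ereal (limsup (f x z))" "dbar x y = real_of_ereal (limsup (f x y))"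
       "dbar y z = real_of_ereal (limsup (f y z))" unfolding dbar_def f_def by auto
  then show ?thesis using le b1 b2 b3
    by (cases "limsup (f x z)"; cases "limsup (f x y)"; cases "limsup (f y z)") auto
qed

lemma language_mono: "A \<subseteq> B \<Longrightarrow> language A \<subseteq> language B"
  unfolding language_def by blast

theorem mainTheorem5:
  fixes X :: "(nat \<Rightarrow> 'a::finite) set" and Xs :: "nat \<Rightarrow> (nat \<Rightarrow> 'a) set"
  assumes "shift_space X"
    and "\<And>n. shift_space (Xs n)"
    and "\<And>n. dbar_shadowing (Xs n)"
    and "\<And>n. X \<subseteq> Xs n"
    and "(\<lambda>n. dbarH X (Xs n)) \<longlonglongrightarrow> 0"
  shows "dbar_shadowing X"
  unfolding dbar_shadowing_def
proof (intro allI impI)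
  fix \<epsilon> :: real assume e: "\<epsilon> > 0"
  have Xne: "X \<noteq> {}" using assms(1) unfolding shift_space_def by auto
  have "\<forall>\<^sub>F n in sequentially. dist (dbarH X (Xs n)) 0 < \<epsilon>/2"
    using assms(5)[unfolded tendsto_iff] e by (meson half_gt_zero)
  then obtain n where n: "dbarH X (Xs n) < \<epsilon>/2"
    by (auto simp: eventually_sequentially dest: spec[of _ 0]) (smt (verit) order_refl)
  obtain N where N: "N \<ge> 1" and sh: "\<And>w::nat \<Rightarrow> 'a list.
      (\<forall>j. w j \<in> language (Xs n) \<and> length (w j) \<ge> N) \<Longrightarrow>
      (\<exists>x'\<in>Xs n. dbar (concat_inf w) x' < \<epsilon>/2)"
    using assms(3)[of n] e unfolding dbar_shadowing_def
    by (metis half_gt_zero)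
  show "\<exists>N\<ge>1. \<forall>w::nat \<Rightarrow> 'a list.
      (\<forall>j. w j \<in> language X \<and> length (w j) \<ge> N) \<longrightarrow>
      (\<exists>x'\<in>X. dbar (concat_inf w) x' < \<epsilon>)"
  proof (intro exI conjI allI impI)
    show "N \<ge> 1" by fact
    fix w :: "nat \<Rightarrow> 'a list"
    assume w: "\<forall>j. w j \<in> language X \<and> length (w j) \<ge> N"
    then have "\<forall>j. w j \<in> language (Xs n) \<and> length (w j) \<ge> N"
      using language_mono[OF assms(4)[of n]] by blast
    then obtain x' where x': "x' \<in> Xs n" "dbar (concat_inf w) x' < \<epsilon>/2" using sh by blast
    obtain a0 where a0: "a0 \<in> X" using Xne by blast
    have bdd: "bdd_above ((\<lambda>b. INF a\<in>X. dbar a b) ` Xs n)"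
    proof (rule bdd_aboveI2)
      fix b show "(INF a\<in>X. dbar a b) \<le> 1"
        using cINF_lower[of "\<lambda>a. dbar a b" X a0] a0 dbar_bounds[of a0 b]
        by (meson bdd_belowI2 dbar_bounds order_trans)
    qed
    have "(INF a\<in>X. dbar a x') \<le> (SUP b\<in>Xs n. INF a\<in>X. dbar a b)"
      by (rule cSUP_upper[OF x'(1) bdd])
    also have "\<dots> \<le> dbarH X (Xs n)" unfolding dbarH_def by simp
    finally have "(INF a\<in>X. dbar a x') < \<epsilon>/2" using n by linarith
    then obtain a where a: "a \<in> X" "dbar a x' < \<epsilon>/2"
      using cINF_less_iff[of X "\<lambda>a. dbar a x'"] Xne by (meson bdd_belowI2 dbar_bounds)
    have "dbar (concat_inf w) a \<le> dbar (concat_inf w) x' + dbar x' a" by (rule dbar_tri)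
    also have "\<dots> < \<epsilon>" using x'(2) a(2) dbar_sym[of a x'] by linarith
    finally show "\<exists>x'\<in>X. dbar (concat_inf w) x' < \<epsilon>" using a(1) by blast
  qed
qed

end
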